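(* Let $\mathcal{B}$ be a real uniform Banach space, $\Omega:\mathcal{B}\to\mathbb{R}$ admissible, $m\in\mathbb{N}$ and $(x_i,y_i)_{i=1}^m\subset\mathcal{B}\times\mathbb{R}$ data for which the constraints $[f,x_i]=y_i$ ($i=1,\dots,m$) can be satisfied. Then there is exactly one solution $f_0$ of the regularised interpolation problem $\min\{\Omega(f): [f,x_i]=y_i\ \forall i\}$ with $f_0^*\in\operatorname{span}\{x_1^*,\dots,x_m^*\}$, and this $f_0$ is the unique minimiser of $\|f\|$ subject to $[f,x_i]=y_i$ for all $i$; in particular it does not depend on the admissible regulariser $\Omega$.
   Context: A real Banach space $\mathcal{B}$ is called uniform if it is uniformly convex and uniformly smooth (equivalently, its norm is uniformly Fréchet differentiable). On such a space there is a unique semi-inner product inducing the norm, i.e. a unique map $[\cdot,\cdot]:\mathcal{B}\times\mathcal{B}\to\mathbb{R}$ that is linear in the first argument, satisfies $[x,x]=\|x\|^2$, $|[x,y]|^2\le[x,x][y,y]$ and $[x,\lambda y]=\lambda[x,y]$ for $\lambda\in\mathbb{R}$; it is given by $[y,x]=\|x\|\lim_{t\to0}\frac{\|x+ty\|-\|x\|}{t}$ for $x\neq0$ (and $[y,0]=0$). The duality map $x\mapsto x^*$, $x^*(y)=[y,x]$, is a (nonlinear in general, but positively and negatively homogeneous) isometric bijection $\mathcal{B}\to\mathcal{B}^*$. Given $m\in\mathbb{N}$ and data $(x_i,y_i)\in\mathcal{B}\times\mathbb{R}$, $i=1,\dots,m$, the regularised interpolation problem is $\min\{\Omega(f): f\in\mathcal{B},\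 [f,x_i]=y_i\ \forall i=1,\dots,m\}$. A function $\Omega:\mathcal{B}\to\mathbb{R}$ is called admissible if for every $m\in\mathbb{N}$ and every data $(x_i,y_i)_{i=1}^m\subset\mathcal{B}\times\mathbb{R}$ for which the constraints $[f,x_i]=y_i$ can be satisfied, the regularised interpolation problem has a minimiser $f_0$ whose dual element satisfies $f_0^*=\sum_{i=1}^m c_i x_i^*$ for some $c_i\in\mathbb{R}$. *)

theory Defs
  imports "HOL-Analysis.Analysis"
begin

definition uniformly_convex :: "'a::real_normed_vector itself \<Rightarrow> bool" where
  "uniformly_convex _ \<longleftrightarrow>
     (\<forall>\<epsilon>>0. \<exists>\<delta>>0. \<forall>x y::'a. norm x \<le> 1 \<and> norm y \<le> 1 \<and> norm (x - y) \<ge> \<epsilon>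
        \<longrightarrow> norm ((1/2) *\<^sub>R (x + y)) \<le> 1 - \<delta>)"

text \<open>Uniform smoothness: the modulus of smoothness rho(tau) satisfies rho(tau)/tau \<rightarrow> 0.\<close>
definition uniformly_smooth :: "'a::real_normed_vector itself \<Rightarrow> bool" where
  "uniformly_smooth _ \<longleftrightarrow>
     (\<forall>\<epsilon>>0. \<exists>\<delta>>0. \<forall>x y::'a. norm x = 1 \<and> norm y \<le> \<delta>
        \<longrightarrow> (norm (x + y) + norm (x - y)) / 2 - 1 \<le> \<epsilon> * norm y)"

definition uniform_space :: "'a::banach itself \<Rightarrow> bool" where
  "uniform_space T \<longleftrightarrow> uniformly_convex T \<and> uniformly_smooth T"

definition sip :: "'a::real_normed_vector \<Rightarrow> 'a \<Rightarrow> real" where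
  "sip y x = (if x = 0 then 0
              else norm x * Lim (at (0::real)) (\<lambda>t. (norm (x + t *\<^sub>R y) - norm x) / t))"

text \<open>f satisfies the interpolation constraints [f, x_i] = y_i, i = 1..m (indices 0..<m).\<close>
definition interpolates :: "nat \<Rightarrow> (nat \<Rightarrow> 'a::real_normed_vector) \<Rightarrow> (nat \<Rightarrow> real) \<Rightarrow> 'a \<Rightarrow> bool" where
  "interpolates m x y f \<longleftrightarrow> (\<forall>i<m. sip f (x i) = y i)"

definition is_minimiser :: "('a::real_normed_vector \<Rightarrow> real) \<Rightarrow> nat \<Rightarrow> (nat \<Rightarrow> 'a) \<Rightarrow> (nat \<Rightarrow> real) \<Rightarrow> 'a \<Rightarrow> bool" where
  "is_minimiser \<Omega> m x y f \<longleftrightarrow> interpolates m x y f \<and> (\<forall>g. interpolates m x y g \<longrightarrow> \<Omega> f \<le> \<Omega> g)"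

text \<open>f^* = \<Sum> c_i x_i^* as functionals, where z^*(w) = [w, z].\<close>
definition dual_in_span :: "nat \<Rightarrow> (nat \<Rightarrow> 'a::real_normed_vector) \<Rightarrow> 'a \<Rightarrow> bool" where
  "dual_in_span m x f \<longleftrightarrow> (\<exists>c::nat \<Rightarrow> real. \<forall>w. sip w f = (\<Sum>i<m. c i * sip w (x i)))"

definition admissible :: "('a::real_normed_vector \<Rightarrow> real) \<Rightarrow> bool" where
  "admissible \<Omega> \<longleftrightarrow>
     (\<forall>m>0. \<forall>(x::nat \<Rightarrow> 'a) (y::nat \<Rightarrow> real). (\<exists>f. interpolates m x y f) \<longrightarrow>
        (\<exists>f0. is_minimiser \<Omega> m x y f0 \<and> dual_in_span m x f0))"

end

theory Submission
  imports Defs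
begin

lemma q_cross:
  fixes x y :: "'a::real_normed_vector"
  assumes s: "s > 0" and t: "t > 0"
  shows "(norm (x + (-s) *\<^sub>R y) - norm x) / (-s) \<le> (norm (x + t *\<^sub>R y) - norm x) / t"
proof -
  have e: "(s+t) *\<^sub>R x = t *\<^sub>R (x + (-s) *\<^sub>R y) + s *\<^sub>R (x + t *\<^sub>R y)"
    by (simp add: algebra_simps)
  have "(s+t) * norm x = norm ((s+t) *\<^sub>R x)" using s t by simp
  also have "\<dots> \<le> norm (t *\<^sub>R (x + (-s) *\<^sub>R y)) + norm (s *\<^sub>R (x + t *\<^sub>R y))"
    unfolding e by (rule norm_triangle_ineq)
  also have "\<dots> = t * norm (x + (-s) *\<^sub>R y) + s * norm (x + t *\<^sub>R y)" using s t by simp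
  finally have ineq: "(s+t) * norm x \<le> t * norm (x + (-s) *\<^sub>R y) + s * norm (x + t *\<^sub>R y)" .
  have "(norm (x + (-s) *\<^sub>R y) - norm x) / (-s) = (norm x - norm (x + (-s) *\<^sub>R y)) / s"
    by (metis minus_diff_eq minus_divide_left minus_divide_right)
  also have "\<dots> \<le> (norm (x + t *\<^sub>R y) - norm x) / t"
    using s t ineq by (simp add: field_simps)
  finally show ?thesis .
qed

lemma qalg: "(a - n) / (t::real) - (b - n) / (-t) = (a + b - 2 * n) / t"
  by (simp add: diff_divide_distrib add_divide_distrib)

lemma q_smooth:
  fixes x y :: "'a::real_normed_vector"
  assumes us: "uniformly_smooth TYPE('a)" and x: "x \<noteq> 0" and e: "e > 0"
  shows "\<exists>d>0. \<forall>t. 0 < t \<and> t \<le> d \<longrightarrow>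
     (norm (x + t *\<^sub>R y) - norm x) / t - (norm (x + (-t) *\<^sub>R y) - norm x) / (-t) \<le> e"
proof (cases "y = 0")
  case True then show ?thesis using e by (intro exI[of _ 1]) simp
next
  case False
  define \<epsilon> where "\<epsilon> = e / (2 * norm y)"
  have ep: "\<epsilon> > 0" using e False by (simp add: \<epsilon>_def)
  obtain \<delta> where dp: "\<delta> > 0" and D: "\<And>u w::'a. norm u = 1 \<Longrightarrow> norm w \<le> \<delta> \<Longrightarrow>
      (norm (u + w) + norm (u - w)) / 2 - 1 \<le> \<epsilon> * norm w"
    using us ep unfolding uniformly_smooth_def by blast
  have nx: "norm x > 0" using x by simp
  have ny: "norm y > 0" using False by simp
  show ?thesis
  proof (intro exI[of _ "\<delta> * norm x / norm y"] conjI allI impI)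
    show "\<delta> * norm x / norm y > 0" using dp nx ny by simp
    fix t assume tt: "0 < t \<and> t \<le> \<delta> * norm x / norm y"
    define u where "u = (1 / norm x) *\<^sub>R x"
    define w where "w = (t / norm x) *\<^sub>R y"
    have nu: "norm u = 1" using nx by (simp add: u_def)
    have nw: "norm w = t * norm y / norm x" using tt nx by (simp add: w_def)
    have "norm w \<le> \<delta>" using tt nx ny by (simp add: nw field_simps)
    from D[OF nu this] have 1: "(norm (u + w) + norm (u - w)) / 2 - 1 \<le> \<epsilon> * norm w" .
    have "u + w = (1 / norm x) *\<^sub>R (x + t *\<^sub>R y)" by (simp add: u_def w_def algebra_simps)
    hence a: "norm (u + w) = norm (x + t *\<^sub>R y) / norm x" using nx by simp
    have "u - w = (1 / norm x) *\<^sub>R (x + (-t) *\<^sub>R y)" by (simp add: u_def w_def algebra_simps)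
    hence b: "norm (u - w) = norm (x + (-t) *\<^sub>R y) / norm x" using nx by simp
    have "norm x * (norm (x + t *\<^sub>R y) + norm (x + (-t) *\<^sub>R y)) \<le> norm x * (e * t + 2 * norm x)"
      using 1 nx ny tt unfolding a b nw \<epsilon>_def by (simp add: field_simps)
    hence h: "norm (x + t *\<^sub>R y) + norm (x + (-t) *\<^sub>R y) - 2 * norm x \<le> e * t"
      using nx mult_le_cancel_left_pos by fastforce
    have "(norm (x + t *\<^sub>R y) + norm (x + (-t) *\<^sub>R y) - 2 * norm x) / t \<le> e"
      using h tt by (simp add: divide_le_eq mult.commute)
    thus "(norm (x + t *\<^sub>R y) - norm x) / t - (norm (x + (-t) *\<^sub>R y) - norm x) / (-t) \<le> e"
      by (simp only: qalg)
  qed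
qed

lemma q_lim:
  fixes x y :: "'a::real_normed_vector"
  assumes us: "uniformly_smooth TYPE('a)" and x: "x \<noteq> 0"
  defines "q \<equiv> \<lambda>t::real. (norm (x + t *\<^sub>R y) - norm x) / t"
  shows "\<exists>L. (q \<longlongrightarrow> L) (at 0) \<and> (\<forall>s>0. q (-s) \<le> L \<and> L \<le> q s)"
proof -
  define L where "L = Inf (q ` {0<..})"
  have cross: "\<And>s t. s > 0 \<Longrightarrow> t > 0 \<Longrightarrow> q (-s) \<le> q t"
    unfolding q_def by (rule q_cross)
  have bdd: "bdd_below (q ` {0<..})"
    by (rule bdd_belowI[of _ "q (-1)"]) (auto intro: cross)
  have up: "\<And>s. s > 0 \<Longrightarrow> L \<le> q s"
    unfolding L_def by (rule cInf_lower[OF _ bdd]) auto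
  have lo: "\<And>s. s > 0 \<Longrightarrow> q (-s) \<le> L"
    unfolding L_def by (rule cInf_greatest) (auto intro: cross)
  have "(q \<longlongrightarrow> L) (at 0)"
    unfolding LIM_eq
  proof (intro allI impI)
    fix r :: real assume r: "r > 0"
    obtain d where d: "d > 0" and D: "\<And>t. 0 < t \<Longrightarrow> t \<le> d \<Longrightarrow> q t - q (-t) \<le> r / 2"
      using q_smooth[OF us x, of "r/2" y] r unfolding q_def by auto
    show "\<exists>s>0. \<forall>t. t \<noteq> 0 \<and> norm (t - 0) < s \<longrightarrow> norm (q t - L) < r"
    proof (intro exI[of _ d] conjI allI impI)
      show "d > 0" by (rule d)
      fix t :: real assume t: "t \<noteq> 0 \<and> norm (t - 0) < d"
      show "norm (q t - L) < r"
      proof (cases "t > 0")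
        case True
        have "L \<le> q t" using up True .
        moreover have "q t - q (-t) \<le> r/2" using D[of t] True t by simp
        moreover have "q (-t) \<le> L" using lo True .
        ultimately show ?thesis using r by simp
      next
        case False
        hence s: "-t > 0" using t by simp
        have "q t \<le> L" using lo[OF s] by simp
        moreover have "q (-t) - q t \<le> r/2" using D[of "-t"] s t by simp
        moreover have "L \<le> q (-t)" using up s .
        ultimately show ?thesis using r by simp
      qed
    qed
  qed
  thus ?thesis using up lo by blast
qed

lemma sip_char:
  fixes x y :: "'a::real_normed_vector"
  assumes us: "uniformly_smooth TYPE('a)" and x: "x \<noteq> 0"
  shows "\<exists>L. sip y x = norm x * L \<and> (\<forall>s>0. (norm (x + (-s) *\<^sub>R y) - norm x) / (-s) \<le> L
            \<and> L \<le> (norm (x + s *\<^sub>R y) - norm x) / s)"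
proof -
  obtain L where L: "((\<lambda>t::real. (norm (x + t *\<^sub>R y) - norm x) / t) \<longlongrightarrow> L) (at 0)"
    and B: "\<forall>s>0. (norm (x + (-s) *\<^sub>R y) - norm x) / (-s) \<le> L
            \<and> L \<le> (norm (x + s *\<^sub>R y) - norm x) / s"
    using q_lim[OF us x, of y] by blast
  have "Lim (at (0::real)) (\<lambda>t. (norm (x + t *\<^sub>R y) - norm x) / t) = L"
    by (rule tendsto_Lim[OF _ L]) simp
  thus ?thesis using B x unfolding sip_def by auto
qed

lemma sip_self:
  fixes g :: "'a::real_normed_vector"
  assumes us: "uniformly_smooth TYPE('a)"
  shows "sip g g = (norm g)^2"
proof (cases "g = 0")
  case True thus ?thesis by (simp add: sip_def)
next
  case False
  obtain L where L: "sip g g = norm g * L" and B: "\<forall>s>0. (norm (g + (-s) *\<^sub>R g) - norm g) / (-s) \<le> L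
            \<and> L \<le> (norm (g + s *\<^sub>R g) - norm g) / s"
    using sip_char[OF us False, of g] by blast
  have "g + (1/2) *\<^sub>R g = (1 + 1/2) *\<^sub>R g" "g + (-(1/2)) *\<^sub>R g = (1 - 1/2) *\<^sub>R g"
    by (simp_all only: scaleR_add_left scaleR_diff_left scaleR_one) simp_all
  moreover have "(1 + 1/2::real) = 3/2" "(1 - 1/2::real) = 1/2" by simp_all
  ultimately have "g + (1/2) *\<^sub>R g = (3/2) *\<^sub>R g" "g + (-(1/2)) *\<^sub>R g = (1/2) *\<^sub>R g"
    by simp_all
  with B[rule_format, of "1/2"] have "L = norm g" by auto
  thus ?thesis using L by (simp add: power2_eq_square)
qed

lemma sip_le:
  fixes f g :: "'a::real_normed_vector"
  assumes us: "uniformly_smooth TYPE('a)"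
  shows "sip f g \<le> norm f * norm g"
proof (cases "g = 0")
  case True thus ?thesis by (simp add: sip_def)
next
  case False
  obtain L where L: "sip f g = norm g * L" and B0: "\<forall>s>0. (norm (g + (-s) *\<^sub>R f) - norm g) / (-s) \<le> L
            \<and> L \<le> (norm (g + s *\<^sub>R f) - norm g) / s"
    using sip_char[OF us False, of f] by blast
  have B: "L \<le> norm (g + f) - norm g" using B0[rule_format, of 1] by simp
  have "norm (g + f) \<le> norm g + norm f" by (rule norm_triangle_ineq)
  hence "L \<le> norm f" using B by simp
  thus ?thesis using L mult_right_mono[of L "norm f" "norm g"] by (simp add: mult.commute)
qed

lemma sip_eq_case:
  fixes f g :: "'a::real_normed_vector"
  assumes us: "uniformly_smooth TYPE('a)" and f: "f \<noteq> 0"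
    and e: "sip g f = (norm f)^2"
  shows "2 * norm f \<le> norm (f + g)"
proof -
  obtain L where L: "sip g f = norm f * L" and B0: "\<forall>s>0. (norm (f + (-s) *\<^sub>R g) - norm f) / (-s) \<le> L
            \<and> L \<le> (norm (f + s *\<^sub>R g) - norm f) / s"
    using sip_char[OF us f, of g] by blast
  have B: "L \<le> norm (f + g) - norm f" using B0[rule_format, of 1] by simp
  have "L = norm f" using L e f by (simp add: power2_eq_square)
  thus ?thesis using B by simp
qed

lemma strict_conv:
  fixes f g :: "'a::real_normed_vector"
  assumes uc: "uniformly_convex TYPE('a)" and n: "norm g = norm f" and f: "f \<noteq> 0"
    and h: "2 * norm f \<le> norm (f + g)"
  shows "g = f"
proof (rule ccontr)
  assume ne: "g \<noteq> f"
  define r where "r = norm f"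
  have r: "r > 0" using f by (simp add: r_def)
  define u where "u = (1/r) *\<^sub>R f"
  define v where "v = (1/r) *\<^sub>R g"
  have nu: "norm u \<le> 1" "norm v \<le> 1" using r n by (simp_all add: u_def v_def r_def)
  have "u - v = (1/r) *\<^sub>R (f - g)" by (simp add: u_def v_def algebra_simps)
  hence pos: "norm (u - v) > 0" using ne r by simp
  obtain \<delta> where dp: "\<delta> > 0" and D: "norm ((1/2) *\<^sub>R (u + v)) \<le> 1 - \<delta>"
    using uc pos nu unfolding uniformly_convex_def by blast
  have "(1/2) *\<^sub>R (u + v) = (1/(2*r)) *\<^sub>R (f + g)" by (simp add: u_def v_def algebra_simps)
  hence "norm ((1/2) *\<^sub>R (u + v)) = norm (f + g) / (2 * r)" using r by simp
  also have "\<dots> \<ge> 1" using h r by (simp add: r_def field_simps)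
  finally show False using D dp by simp
qed

lemma span_min:
  fixes g0 :: "'a::real_normed_vector"
  assumes us: "uniformly_smooth TYPE('a)" and i: "interpolates m x y g0"
    and d: "dual_in_span m x g0"
  shows "is_minimiser norm m x y g0"
  unfolding is_minimiser_def
proof (intro conjI allI impI i)
  fix f assume f: "interpolates m x y f"
  obtain c where c: "\<And>w. sip w g0 = (\<Sum>i<m. c i * sip w (x i))"
    using d unfolding dual_in_span_def by blast
  have "sip f g0 = (\<Sum>i<m. c i * y i)" using c f unfolding interpolates_def by simp
  moreover have "sip g0 g0 = (\<Sum>i<m. c i * y i)" using c i unfolding interpolates_def by simp
  ultimately have "(norm g0)^2 \<le> norm f * norm g0"
    using sip_le[OF us, of f g0] sip_self[OF us, of g0] by simp
  thus "norm g0 \<le> norm f"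
    by (metis less_eq_real_def mult_right_le_imp_le norm_ge_zero power2_eq_square zero_less_norm_iff norm_zero mult_zero_left)
qed

lemma span_unique:
  fixes g0 :: "'a::banach"
  assumes u: "uniform_space TYPE('a)" and i: "interpolates m x y g0"
    and d: "dual_in_span m x g0" and g: "is_minimiser norm m x y g"
  shows "g = g0"
proof -
  have us: "uniformly_smooth TYPE('a)" and uc: "uniformly_convex TYPE('a)"
    using u unfolding uniform_space_def by auto
  have m0: "is_minimiser norm m x y g0" by (rule span_min[OF us i d])
  have gi: "interpolates m x y g" using g unfolding is_minimiser_def by blast
  have n: "norm g = norm g0" using g m0 i gi unfolding is_minimiser_def by (meson order_antisym)
  obtain c where c: "\<And>w. sip w g0 = (\<Sum>i<m. c i * sip w (x i))"
    using d unfolding dual_in_span_def by blast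
  have "sip g g0 = sip g0 g0" using c gi i unfolding interpolates_def by simp
  hence e: "sip g g0 = (norm g0)^2" using sip_self[OF us] by simp
  show ?thesis
  proof (cases "g0 = 0")
    case True thus ?thesis using n by simp
  next
    case False
    show ?thesis by (rule strict_conv[OF uc n False sip_eq_case[OF us False e]])
  qed
qed

theorem mainTheorem5:
  fixes \<Omega> :: "'a::banach \<Rightarrow> real" and m :: nat
    and x :: "nat \<Rightarrow> 'a" and y :: "nat \<Rightarrow> real"
  assumes "uniform_space TYPE('a)"
    and "admissible \<Omega>"
    and "m > 0"
    and "\<exists>f. interpolates m x y f"
  shows "\<exists>f0. is_minimiser \<Omega> m x y f0 \<and> dual_in_span m x f0
           \<and> (\<forall>g. is_minimiser \<Omega> m x y g \<and> dual_in_span m x g \<longrightarrow> g = f0)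
           \<and> is_minimiser norm m x y f0
           \<and> (\<forall>g. is_minimiser norm m x y g \<longrightarrow> g = f0)"
proof -
  have us: "uniformly_smooth TYPE('a)" using assms(1) unfolding uniform_space_def by auto
  obtain f0 where f0: "is_minimiser \<Omega> m x y f0" and d: "dual_in_span m x f0"
    using assms(2,3,4) unfolding admissible_def by blast
  have i: "interpolates m x y f0" using f0 unfolding is_minimiser_def by blast
  show ?thesis
  proof (intro exI[of _ f0] conjI allI impI f0 d)
    fix g assume g: "is_minimiser \<Omega> m x y g \<and> dual_in_span m x g"
    hence gi: "interpolates m x y g" unfolding is_minimiser_def by blast
    have "is_minimiser norm m x y g" using span_min[OF us gi] g by blast
    thus "g = f0" by (rule span_unique[OF assms(1) i d])
  next
    show "is_minimiser norm m x y f0" by (rule span_min[OF us i d])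
  next
    fix g assume "is_minimiser norm m x y g"
    thus "g = f0" by (rule span_unique[OF assms(1) i d])
  qed
qed

end
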